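(* Let $\mathbf{X}\subset\mathbb{R}^d$ be finite, $k\ge1$, $\ell>0$, $T\ge1$, and run the $k$-means$\parallel$ seeding algorithm with oversampling parameter $\ell$ for $T$ rounds, producing $C_1\subseteq C_2\subseteq\dots\subseteq C_{T+1}$. Then - if $\ell<k$: $\mathbb{E}[\mathrm{cost}(\mathbf{X},C_{T+1})]\le\big(e^{-\ell/k}\big)^T\,\mathbb{E}[\mathrm{cost}(\mathbf{X},C_1)]+\dfrac{5\,\mathrm{OPT}_k(\mathbf{X})}{1-e^{-\ell/k}}$; - if $\ell\ge k$: $\mathbb{E}[\mathrm{cost}(\mathbf{X},C_{T+1})]\le\big(\tfrac{k}{e\ell}\big)^T\,\mathbb{E}[\mathrm{cost}(\mathbf{X},C_1)]+\dfrac{5\,\mathrm{OPT}_k(\mathbf{X})}{1-k/(e\ell)}$.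
   Context: For a finite $C\subset\mathbb{R}^d$, $\mathrm{cost}(x,C)=\min_{c\in C}\|x-c\|^2$, $\mathrm{cost}(\mathbf{Y},C)=\sum_{x\in\mathbf{Y}}\mathrm{cost}(x,C)$, $\mathrm{OPT}_k(\mathbf{X})=\min_{|C|=k}\mathrm{cost}(\mathbf{X},C)$. The $k$-means$\parallel$ seeding algorithm with parameters $\ell,T$: choose $c$ uniformly at random from $\mathbf{X}$, $C_1=\{c\}$; for $t=1,\dots,T$, let $\lambda_t(x)=\ell\,\mathrm{cost}(x,C_t)/\mathrm{cost}(\mathbf{X},C_t)$, include each $x\in\mathbf{X}$ in a set $C'$ independently with probability $\min\{1,\lambda_t(x)\}$, and set $C_{t+1}=C_t\cup C'$. *)

theory Defs
  imports "HOL-Analysis.Analysis" "HOL-Probability.Probability"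
begin

definition cost :: "'a::euclidean_space \<Rightarrow> 'a set \<Rightarrow> real" where
  "cost x C = Min ((\<lambda>c. (norm (x - c))^2) ` C)"

definition cost_set :: "'a::euclidean_space set \<Rightarrow> 'a set \<Rightarrow> real" where
  "cost_set Y C = (\<Sum>x\<in>Y. cost x C)"

definition OPT :: "nat \<Rightarrow> 'a::euclidean_space set \<Rightarrow> real" where
  "OPT k X = Inf {cost_set X C | C. finite C \<and> card C = k}"

definition kmpar_step :: "'a::euclidean_space set \<Rightarrow> real \<Rightarrow> 'a set \<Rightarrow> 'a set pmf" where
  "kmpar_step X l C =
     map_pmf (\<lambda>b. C \<union> {x\<in>X. b x})
       (Pi_pmf X False (\<lambda>x. bernoulli_pmf (min 1 (l * cost x C / cost_set X C))))"

text \<open>kmpar_seed X l t is the distribution of C_{t+1}; C_1 = {c}, c uniform in X.\<close>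
fun kmpar_seed :: "'a::euclidean_space set \<Rightarrow> real \<Rightarrow> nat \<Rightarrow> 'a set pmf" where
  "kmpar_seed X l 0 = map_pmf (\<lambda>c. {c}) (pmf_of_set X)"
| "kmpar_seed X l (Suc t) = bind_pmf (kmpar_seed X l t) (kmpar_step X l)"

definition expected_cost :: "'a::euclidean_space set \<Rightarrow> real \<Rightarrow> nat \<Rightarrow> real" where
  "expected_cost X l t = measure_pmf.expectation (kmpar_seed X l t) (\<lambda>C. cost_set X C)"

end

theory Submission
  imports Defs
begin


lemma xexp_le: fixes x :: real shows "x * exp (-x) \<le> exp (-1)"
proof -
  have "x \<le> exp (x - 1)" using exp_ge_add_one_self[of "x-1"] by simp
  hence "x * exp (-x) \<le> exp (x-1) * exp (-x)" by (simp add: mult_right_mono)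
  also have "\<dots> = exp (-1)" by (simp add: exp_add[symmetric])
  finally show ?thesis .
qed

lemma tangent_ineq:
  fixes a w :: real assumes "0 \<le> a" "a \<le> 1" "-a \<le> w"
  shows "(a + w) * exp (-w) \<le> a + (1 - a) * w"
proof -
  have c: "0 \<le> a + (1 - a) * w"
  proof (cases "w \<ge> 0")
    case True thus ?thesis using assms by simp
  next
    case False
    hence "(1-a)*w \<ge> w" using assms by (simp add: mult_le_cancel_right1)
    thus ?thesis using assms by linarith
  qed
  have "a + w \<le> (a + (1-a)*w) * (1 + w)"
  proof -
    have "(a + (1-a)*w) * (1 + w) = a + w + (1-a)*w^2" by (simp add: algebra_simps power2_eq_square)
    moreover have "(1-a)*w^2 \<ge> 0" using assms by simp
    ultimately show ?thesis by linarith
  qed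
  also have "\<dots> \<le> (a + (1-a)*w) * exp w"
    using c exp_ge_add_one_self[of w] by (intro mult_left_mono) auto
  finally have "a + w \<le> (a + (1-a)*w) * exp w" .
  hence "(a + w) * exp (-w) \<le> (a + (1-a)*w) * exp w * exp (-w)"
    by (intro mult_right_mono) auto
  also have "\<dots> = a + (1-a)*w" by (simp add: mult.assoc exp_add[symmetric])
  finally show ?thesis .
qed

lemma gconc:
  fixes a b :: real assumes "0 \<le> a" "a \<le> b"
  shows "(1 - exp (-b)) * a \<le> (1 - exp (-a)) * b"
proof (cases "b = 0")
  case True thus ?thesis using assms by simp
next
  case False
  hence bp: "b > 0" using assms by simp
  define th where "th = a / b"
  have th: "0 \<le> th" "th \<le> 1" using assms bp by (auto simp: th_def)
  have "exp ((1 - th) * 0 + th * (-b)) \<le> (1 - th) * exp 0 + th * exp (-b)"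
    using convex_onD[OF exp_convex, of th 0 "-b"] th by simp
  moreover have "(1 - th) * 0 + th * (-b) = -a" using bp by (simp add: th_def)
  ultimately have "exp (-a) \<le> 1 - th + th * exp (-b)" by simp
  hence "th * (1 - exp (-b)) \<le> 1 - exp (-a)" by (simp add: algebra_simps)
  hence "th * (1 - exp (-b)) * b \<le> (1 - exp (-a)) * b" using bp by (simp add: mult_right_mono)
  moreover have "th * b = a" using bp by (simp add: th_def)
  ultimately show ?thesis by (metis mult.commute mult.left_commute)
qed




lemma perx_case1:
  fixes b r s :: real
  assumes "0 \<le> b" "b \<le> 1" "0 \<le> r" "0 \<le> s" "s \<le> b + r"
  shows "s^2 * min 1 (r^2) \<le> 4*r^2"
proof (cases "r \<ge> 1")
  case True
  hence "s \<le> 2*r" using assms by linarith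
  hence "s^2 \<le> (2*r)^2" using assms by (intro power_mono) auto
  thus ?thesis using True by (simp add: power_mult_distrib min_def)
next
  case False
  hence "s \<le> 2" using assms by linarith
  hence "s^2 \<le> 2^2" using assms by (intro power_mono) auto
  hence "s^2 * r^2 \<le> 4 * r^2" by (intro mult_right_mono) auto
  moreover have "min 1 (r^2) = r^2" using False assms
    by (simp add: min_def) (metis abs_of_nonneg abs_square_le_1 less_eq_real_def not_le power2_eq_square)
  ultimately show ?thesis by simp
qed

lemma perx_case2:
  fixes b r s :: real
  assumes "1 < b" "2 \<le> b^2" "0 \<le> r" "0 \<le> s" "b - r \<le> s"
  shows "s^2 * min 1 (r^2) \<le> 4*r^2 + (s^2 - 1)"
proof (cases "r \<ge> 1")
  case True
  hence h1: "1 \<le> r^2" by (simp add: one_le_power)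
  hence "min 1 (r^2) = 1" by simp
  thus ?thesis using h1 by simp
next
  case False
  define q where "q = sqrt 2"
  have q2: "q^2 = 2" by (simp add: q_def)
  have qb: "q \<le> b" using assms by (simp add: q_def real_le_lsqrt)
  have q0: "0 \<le> q" by (simp add: q_def)
  have r1: "r < 1" using False by simp
  have "q - r \<ge> 0"
  proof -
    have "1 \<le> q" by (simp add: q_def)
    thus ?thesis using r1 by linarith
  qed
  hence "(q - r)^2 \<le> s^2" using qb assms by (intro power_mono) auto
  have rr: "r^2 \<le> 1" using r1 assms by (simp add: power_le_one)
  have mm: "min 1 (r^2) = r^2" using rr by simp
  have key: "1 - 4*r^2 \<le> (q-r)^2 * (1 - r^2)"
  proof -
    have e: "(q-r)^2 * (1 - r^2) - (1 - 4*r^2) = (1 - q*r)^2 + r^2*(1 + 2*q*r - r^2)"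
      by (simp add: algebra_simps power2_eq_square q2[unfolded power2_eq_square] power3_eq_cube power4_eq_xxxx)
    have "r^2 \<le> 1" by (rule rr)
    moreover have "0 \<le> q*r" using q0 assms by simp
    ultimately have "0 \<le> 1 + 2*q*r - r^2" by linarith
    hence "0 \<le> r^2*(1 + 2*q*r - r^2)" by simp
    moreover have "0 \<le> (1 - q*r)^2" by simp
    ultimately show ?thesis using e by linarith
  qed
  have "(q-r)^2 * (1 - r^2) \<le> s^2 * (1 - r^2)"
    using \<open>(q - r)^2 \<le> s^2\<close> rr by (intro mult_right_mono) auto
  thus ?thesis using key mm by (simp add: algebra_simps)
qed




lemma perx_case3:
  fixes b r s :: real
  assumes "1 < b" "b^2 < 2" "0 \<le> r" "0 \<le> s" "b - r \<le> s" "s \<le> b + r"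
  shows "s^2 * min 1 (r^2) \<le> 4*r^2 + (b^2 - 1)*(s^2 - 1)"
proof -
  define u where "u = b^2 - 1"
  have u0: "0 < u" "u < 1" using assms by (auto simp: u_def)
  have ub: "u = (b - 1)*(b + 1)" by (simp add: u_def algebra_simps power2_eq_square)
  have sup: "s^2 \<le> (b+r)^2" using assms by (intro power_mono) auto
  show ?thesis unfolding u_def[symmetric]
  proof (cases "r \<ge> 1")
    case True
    have m: "min 1 (r^2) = 1" using True by (simp add: one_le_power)
    have "s^2 * (1 - u) \<le> (b+r)^2 * (1 - u)" using sup u0 by (intro mult_right_mono) auto
    also have "\<dots> \<le> 4*r^2 - u"
    proof -
      have P: "(b+r)^2 * (1-u) - (4*r^2 - u) = (b - r)*(b + 3*r) - u*((b+r)^2 - 1)"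
        by (simp add: algebra_simps power2_eq_square)
      have A: "(b+r)^2 - 1 \<ge> 3"
      proof -
        have "2 \<le> b + r" using assms True by linarith
        hence "2^2 \<le> (b+r)^2" by (intro power_mono) auto
        thus ?thesis by simp
      qed
      have "(b - r)*(b + 3*r) - u*((b+r)^2 - 1) \<le> 0"
      proof (cases "r \<ge> b")
        case True
        hence "(b - r)*(b + 3*r) \<le> 0" using assms by (intro mult_nonpos_nonneg) auto
        moreover have "u*((b+r)^2 - 1) \<ge> 0" using u0 A by simp
        ultimately show ?thesis by linarith
      next
        case False
        have "(b - r)*(b + 3*r) \<le> (b - 1)*(4*b)"
          using False True assms by (intro mult_mono) auto
        moreover have "u*3 \<le> u*((b+r)^2 - 1)" using u0 A by (intro mult_left_mono) auto
        moreover have "(b - 1)*(4*b) - u*3 = (b-1)*(b-3)" by (simp add: ub algebra_simps)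
        moreover have "(b-1)*(b-3) \<le> 0"
        proof -
          have "b < 2"
          proof (rule ccontr)
            assume "\<not> b < 2"
            hence "(2::real)^2 \<le> b^2" by (intro power_mono) auto
            thus False using assms(2) by simp
          qed
          thus ?thesis using assms by (intro mult_nonneg_nonpos) auto
        qed
        ultimately show ?thesis by linarith
      qed
      thus ?thesis using P by linarith
    qed
    finally show "s^2 * min 1 (r^2) \<le> 4*r^2 + u*(s^2 - 1)" using m by (simp add: algebra_simps)
  next
    case False
    hence r1: "r < 1" by simp
    have rr: "r^2 \<le> 1" using r1 assms by (simp add: power_le_one)
    have m: "min 1 (r^2) = r^2" using rr by simp
    show "s^2 * min 1 (r^2) \<le> 4*r^2 + u*(s^2 - 1)"
    proof (cases "r^2 \<ge> u")
      case True
      have "s^2 * (r^2 - u) \<le> (b+r)^2 * (r^2 - u)" using sup True by (intro mult_right_mono) auto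
      also have "\<dots> \<le> 4*r^2 - u"
      proof -
        have bu: "b^2 = 1 + u" by (simp add: u_def)
        have H: "(b+r)^2 * (r^2 - u) - (4*r^2 - u) = r^2*(r^2 + 2*b*r - 3) - 2*b*u*r - u^2"
        proof -
          have "(b+r)^2 * (r^2 - u) - (4*r^2 - u) = b^2*r^2 - b^2*u + 2*b*r^3 - 2*b*u*r + r^4 - u*r^2 - 4*r^2 + u"
            by (simp add: algebra_simps power2_eq_square power3_eq_cube power4_eq_xxxx)
          also have "\<dots> = r^2*(r^2 + 2*b*r - 3) - 2*b*u*r - u^2"
            unfolding bu by (simp add: algebra_simps power2_eq_square power3_eq_cube power4_eq_xxxx)
          finally show ?thesis .
        qed
        have "r^2 + 2*b*r - 3 \<le> 2*(b-1)*r"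
        proof -
          have "r^2 + 2*b*r - 3 = (r - 1)*(r + 3) + 2*(b-1)*r" by (simp add: algebra_simps power2_eq_square)
          moreover have "(r - 1)*(r + 3) \<le> 0" using r1 assms by (intro mult_nonpos_nonneg) auto
          ultimately show ?thesis by linarith
        qed
        hence "r^2*(r^2 + 2*b*r - 3) \<le> r^2*(2*(b-1)*r)" by (intro mult_left_mono) auto
        moreover have "r^2*(2*(b-1)*r) - 2*b*u*r = 2*(b-1)*r*(r^2 - b*(b+1))"
          by (simp add: ub algebra_simps power2_eq_square)
        moreover have "2*(b-1)*r*(r^2 - b*(b+1)) \<le> 0"
        proof -
          have "r^2 - b*(b+1) \<le> 0"
          proof -
            have "1*1 \<le> b*(b+1)" using assms by (intro mult_mono) auto
            thus ?thesis using rr by linarith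
          qed
          moreover have "0 \<le> 2*(b-1)*r" using assms by simp
          ultimately show ?thesis by (intro mult_nonneg_nonpos) auto
        qed
        moreover have "u^2 \<ge> 0" by simp
        ultimately show ?thesis using H by linarith
      qed
      finally show ?thesis using m by (simp add: algebra_simps)
    next
      case False
      have bpos: "0 \<le> b - r" using r1 assms by linarith
      have slo: "(b-r)^2 \<le> s^2" using bpos assms by (intro power_mono) auto
      have "s^2 * (u - r^2) \<ge> (b-r)^2 * (u - r^2)" using slo False by (intro mult_right_mono) auto
      moreover have "(b-r)^2 * (u - r^2) \<ge> u - 4*r^2"
      proof -
        have E: "(b-r)^2 * (u - r^2) - (u - 4*r^2) = u*(u - 2*b*r + r^2) + r^2*(4 - (b-r)^2)"
        proof -
          have "(b-r)^2 = 1 + u - 2*b*r + r^2" by (simp add: u_def algebra_simps power2_eq_square)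
          thus ?thesis by (simp add: algebra_simps power2_eq_square)
        qed
        have "(b-r)^2 \<le> b^2" using bpos assms by (intro power_mono) auto
        hence "(b-r)^2 \<le> 2" using assms by linarith
        hence "r^2*2 \<le> r^2*(4 - (b-r)^2)" by (intro mult_left_mono) auto
        moreover have "u*(u - 2*b*r + r^2) \<ge> u*(u - 2*b*r)" using u0 by (intro mult_left_mono) auto
        moreover have "u*(u - 2*b*r) + r^2*2 \<ge> 0"
        proof -
          have "u*(u - 2*b*r) + r^2*2 = 2*(r - u*b/2)^2 + u^2*(1 - b^2/2)"
            by (simp add: algebra_simps power2_eq_square)
          moreover have "u^2*(1 - b^2/2) \<ge> 0" using assms by simp
          moreover have "0 \<le> 2*(r - u*b/2)^2" by simp
          ultimately show ?thesis by linarith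
        qed
        ultimately show ?thesis using E by linarith
      qed
      ultimately have "s^2 * (u - r^2) \<ge> u - 4*r^2" by linarith
      thus ?thesis using m by (simp add: algebra_simps)
    qed
  qed
qed


lemma perx_norm:
  fixes b r s :: real
  assumes "0 \<le> b" "0 \<le> r" "0 \<le> s" "s \<le> b + r" "b - r \<le> s"
  shows "s^2 * min 1 (r^2) \<le> 4*r^2 + max 0 (min 1 (b^2 - 1)) * (s^2 - 1)"
proof (cases "b \<le> 1")
  case True
  hence "b^2 \<le> 1" using assms by (simp add: power_le_one)
  hence "max 0 (min 1 (b^2 - 1)) = 0" by simp
  thus ?thesis using perx_case1[OF assms(1) True assms(2,3,4)] by simp
next
  case False
  hence b1: "1 < b" by simp
  show ?thesis
  proof (cases "2 \<le> b^2")
    case True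
    hence "max 0 (min 1 (b^2 - 1)) = 1" by simp
    thus ?thesis using perx_case2[OF b1 True assms(2,3,5)] by simp
  next
    case False
    hence b2: "b^2 < 2" by simp
    have "1 < b^2" using b1 by (simp add: one_less_power)
    hence "max 0 (min 1 (b^2 - 1)) = b^2 - 1" using b2 by simp
    thus ?thesis using perx_case3[OF b1 b2 assms(2,3,5,4)] by simp
  qed
qed

lemma perx:
  fixes g be rh c :: real
  assumes "0 < g" "0 \<le> be" "0 \<le> rh" "0 \<le> c" "sqrt c \<le> be + rh" "be - rh \<le> sqrt c"
  shows "c * min (g^2) (rh^2) \<le> 4*g^2*rh^2 + max 0 (min 1 ((be/g)^2 - 1)) * g^2 * (c - g^2)"
proof -
  define \<kappa> where "\<kappa> = max 0 (min 1 ((be/g)^2 - 1))"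
  have N: "(sqrt c/g)^2 * min 1 ((rh/g)^2) \<le> 4*(rh/g)^2 + \<kappa> * ((sqrt c/g)^2 - 1)"
    unfolding \<kappa>_def using assms
    by (intro perx_norm) (auto simp: divide_right_mono diff_divide_distrib[symmetric] add_divide_distrib[symmetric])
  have sc: "(sqrt c/g)^2 = c / g^2" using assms by (simp add: power_divide)
  have mm: "min (g^2) (rh^2) = g^2 * min 1 ((rh/g)^2)"
    using assms by (simp add: power_divide min_mult_distrib_left)
  have "c * min (g^2) (rh^2) = g^4 * ((sqrt c/g)^2 * min 1 ((rh/g)^2))"
    unfolding mm sc using assms by (simp add: field_simps power2_eq_square power4_eq_xxxx)
  also have "\<dots> \<le> g^4 * (4*(rh/g)^2 + \<kappa> * ((sqrt c/g)^2 - 1))"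
    using N by (intro mult_left_mono) auto
  also have "\<dots> = 4*g^2*rh^2 + \<kappa> * g^2 * (c - g^2)"
    unfolding sc using assms by (simp add: field_simps power2_eq_square power4_eq_xxxx)
  finally show ?thesis unfolding \<kappa>_def .
qed

lemma cost_le: "finite C \<Longrightarrow> c \<in> C \<Longrightarrow> cost x C \<le> (norm (x - c))^2"
  unfolding cost_def by (rule Min_le) auto

lemma cost_ex: "finite C \<Longrightarrow> C \<noteq> {} \<Longrightarrow> \<exists>c\<in>C. cost x C = (norm (x - c))^2"
proof -
  assume "finite C" "C \<noteq> {}"
  hence "Min ((\<lambda>c. (norm (x - c))^2) ` C) \<in> (\<lambda>c. (norm (x - c))^2) ` C" by (intro Min_in) auto
  thus ?thesis unfolding cost_def by auto
qed

lemma cost_nonneg: "finite C \<Longrightarrow> C \<noteq> {} \<Longrightarrow> 0 \<le> cost x C"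
  using cost_ex[of C x] by auto

lemma cost_mono: "finite D \<Longrightarrow> C \<subseteq> D \<Longrightarrow> C \<noteq> {} \<Longrightarrow> cost x D \<le> cost x C"
  unfolding cost_def by (rule Min_antimono) auto

lemma cost_set_nonneg: "finite C \<Longrightarrow> C \<noteq> {} \<Longrightarrow> 0 \<le> cost_set Y C"
  unfolding cost_set_def by (intro sum_nonneg cost_nonneg)

lemma cost_lip:
  assumes "finite C" "C \<noteq> {}"
  shows "sqrt (cost x C) \<le> sqrt (cost y C) + norm (x - y)"
proof -
  obtain c where c: "c \<in> C" "cost y C = (norm (y - c))^2" using cost_ex[OF assms] by blast
  have "sqrt (cost x C) \<le> sqrt ((norm (x - c))^2)"
    using cost_le[OF assms(1) c(1)] by (rule real_sqrt_le_mono)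
  also have "\<dots> = norm (x - c)" by simp
  also have "\<dots> \<le> norm (x - y) + norm (y - c)" using norm_diff_triangle_le[of x y "norm (x-y)" c "norm (y-c)"] by simp
  also have "norm (y - c) = sqrt (cost y C)" using c by simp
  finally show ?thesis by simp
qed

definition cen :: "'a::euclidean_space set \<Rightarrow> 'a" where
  "cen A = (1 / real (card A)) *\<^sub>R (\<Sum>A)"

lemma sum_diff_cen: "finite A \<Longrightarrow> A \<noteq> {} \<Longrightarrow> (\<Sum>y\<in>A. y - cen A) = 0"
proof -
  assume A: "finite A" "A \<noteq> {}"
  hence "card A > 0" by (simp add: card_gt_0_iff)
  hence "(\<Sum>y\<in>A. cen A) = \<Sum>A" by (simp add: cen_def sum_constant_scaleR)
  thus ?thesis by (simp add: sum_subtractf)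
qed

lemma centroid_identity:
  fixes A :: "'a::euclidean_space set"
  assumes "finite A" "A \<noteq> {}"
  shows "(\<Sum>y\<in>A. (norm (y - z))^2) = (\<Sum>y\<in>A. (norm (y - cen A))^2) + real (card A) * (norm (z - cen A))^2"
proof -
  define \<mu> where "\<mu> = cen A"
  have e: "(norm (y - z))^2 = (norm (y - \<mu>))^2 - 2 * ((y - \<mu>) \<bullet> (z - \<mu>)) + (norm (z - \<mu>))^2" for y
  proof -
    have "y - z = (y - \<mu>) - (z - \<mu>)" by simp
    hence "(norm (y - z))^2 = (norm ((y - \<mu>) - (z - \<mu>)))^2" by metis
    also have "\<dots> = (norm (y - \<mu>))^2 - 2 * ((y - \<mu>) \<bullet> (z - \<mu>)) + (norm (z - \<mu>))^2"
      by (simp add: power2_norm_eq_inner inner_diff_left inner_diff_right inner_commute)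
    finally show ?thesis .
  qed
  have z: "(\<Sum>y\<in>A. (y - \<mu>) \<bullet> (z - \<mu>)) = 0"
    using sum_diff_cen[OF assms] by (simp add: \<mu>_def inner_sum_left[symmetric])
  have "(\<Sum>y\<in>A. (norm (y - z))^2) = (\<Sum>y\<in>A. (norm (y - \<mu>))^2) - 2 * (\<Sum>y\<in>A. (y - \<mu>) \<bullet> (z - \<mu>)) + (\<Sum>y\<in>A. (norm (z - \<mu>))^2)"
    by (simp add: e sum.distrib sum_subtractf sum_distrib_left)
  thus ?thesis using z by (simp add: \<mu>_def)
qed


lemma d2_lemma:
  fixes A C :: "'a::euclidean_space set"
  assumes A: "finite A" "A \<noteq> {}" and C: "finite C" "C \<noteq> {}"
  shows "(\<Sum>x\<in>A. cost x C * min (cost_set A C) (\<Sum>y\<in>A. (norm (y - x))^2))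
           \<le> 5 * cost_set A C * (\<Sum>y\<in>A. (norm (y - cen A))^2)"
proof -
  define \<Phi> where "\<Phi> = cost_set A C"
  define R where "R = (\<Sum>y\<in>A. (norm (y - cen A))^2)"
  define m where "m = real (card A)"
  define \<rho> where "\<rho> x = norm (x - cen A)" for x
  have m0: "m > 0" using A by (simp add: m_def card_gt_0_iff)
  have R0: "R \<ge> 0" unfolding R_def by (intro sum_nonneg) auto
  have c0: "\<And>x. 0 \<le> cost x C" using cost_nonneg[OF C] .
  have Phi0: "\<Phi> \<ge> 0" unfolding \<Phi>_def cost_set_def by (intro sum_nonneg c0)
  have f: "(\<Sum>y\<in>A. (norm (y - x))^2) = R + m * (\<rho> x)^2" for x
    unfolding R_def m_def \<rho>_def by (rule centroid_identity[OF A])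
  show ?thesis
  proof (cases "\<Phi> = 0")
    case True
    have z: "cost_set A C = 0" using True by (simp add: \<Phi>_def)
    hence "(\<Sum>x\<in>A. cost x C) = 0" by (simp add: cost_set_def)
    hence "\<forall>x\<in>A. cost x C = 0" using sum_nonneg_eq_0_iff[OF A(1), of "\<lambda>x. cost x C"] c0 by simp
    thus ?thesis using z by simp
  next
    case False
    hence Phip: "\<Phi> > 0" using Phi0 by simp
    define g where "g = sqrt (\<Phi> / m)"
    have g0: "g > 0" using Phip m0 by (simp add: g_def)
    have g2: "g^2 = \<Phi> / m" using Phip m0 by (simp add: g_def)
    define be where "be = Min ((\<lambda>y. sqrt (cost y C) + \<rho> y) ` A)"
    have be_le: "be \<le> sqrt (cost x C) + \<rho> x" if "x \<in> A" for x
      unfolding be_def by (rule Min_le) (use A that in simp_all)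
    have "be \<in> (\<lambda>y. sqrt (cost y C) + \<rho> y) ` A" unfolding be_def by (rule Min_in) (use A in simp_all)
    then obtain y0 where y0: "y0 \<in> A" "be = sqrt (cost y0 C) + \<rho> y0" by blast
    have be0: "0 \<le> be" using y0 c0[of y0] by (simp add: \<rho>_def)
    have up: "sqrt (cost x C) \<le> be + \<rho> x" for x
    proof -
      have "sqrt (cost x C) \<le> sqrt (cost y0 C) + norm (x - y0)" by (rule cost_lip[OF C])
      also have "norm (x - y0) \<le> \<rho> x + \<rho> y0" unfolding \<rho>_def
        using norm_diff_triangle_le[of x "cen A" "norm (x - cen A)" y0 "norm (y0 - cen A)"] by (simp add: norm_minus_commute)
      finally show ?thesis using y0 by simp
    qed
    define \<kappa> where "\<kappa> = max 0 (min 1 ((be/g)^2 - 1))"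
    have px: "cost x C * min (g^2) ((\<rho> x)^2) \<le> 4*g^2*(\<rho> x)^2 + \<kappa> * g^2 * (cost x C - g^2)"
      if "x \<in> A" for x
      unfolding \<kappa>_def using g0 be0 c0[of x] up[of x] be_le[OF that]
      by (intro perx) (auto simp: \<rho>_def)
    have S1: "(\<Sum>x\<in>A. cost x C * min (g^2) ((\<rho> x)^2)) \<le> 4 * g^2 * R"
    proof -
      have "(\<Sum>x\<in>A. cost x C * min (g^2) ((\<rho> x)^2)) \<le> (\<Sum>x\<in>A. 4*g^2*(\<rho> x)^2 + \<kappa> * g^2 * (cost x C - g^2))"
        by (intro sum_mono px)
      also have "\<dots> = 4*g^2*R + \<kappa> * g^2 * (\<Phi> - m * g^2)"
        by (simp add: sum.distrib sum_distrib_left sum_subtractf R_def \<rho>_def \<Phi>_def cost_set_def m_def right_diff_distrib)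
      also have "\<Phi> - m * g^2 = 0" using m0 by (simp add: g2)
      finally show ?thesis by simp
    qed
    have tm: "cost x C * min \<Phi> (\<Sum>y\<in>A. (norm (y - x))^2) \<le> cost x C * R + m * (cost x C * min (g^2) ((\<rho> x)^2))" for x
    proof -
      have "min \<Phi> (R + m * (\<rho> x)^2) \<le> R + min \<Phi> (m * (\<rho> x)^2)" using R0 by linarith
      also have "min \<Phi> (m * (\<rho> x)^2) = m * min (g^2) ((\<rho> x)^2)"
        using m0 by (simp add: g2 min_mult_distrib_left)
      finally have "cost x C * min \<Phi> (R + m * (\<rho> x)^2) \<le> cost x C * (R + m * min (g^2) ((\<rho> x)^2))"
        using c0[of x] by (intro mult_left_mono) auto
      thus ?thesis unfolding f by (simp add: algebra_simps)
    qed
    have "(\<Sum>x\<in>A. cost x C * min \<Phi> (\<Sum>y\<in>A. (norm (y - x))^2)) \<le> (\<Sum>x\<in>A. cost x C * R + m * (cost x C * min (g^2) ((\<rho> x)^2)))"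
      by (intro sum_mono tm)
    also have "\<dots> = \<Phi> * R + m * (\<Sum>x\<in>A. cost x C * min (g^2) ((\<rho> x)^2))"
      by (simp add: sum.distrib sum_distrib_left sum_distrib_right \<Phi>_def cost_set_def)
    also have "\<dots> \<le> \<Phi> * R + m * (4 * g^2 * R)"
      using S1 m0 by (intro add_left_mono mult_left_mono) auto
    also have "m * (4 * g^2 * R) = 4 * \<Phi> * R" using m0 by (simp add: g2)
    finally show ?thesis unfolding \<Phi>_def R_def by simp
  qed
qed


lemma finite_bool_funs: "finite A \<Longrightarrow> finite {f::'a\<Rightarrow>bool. \<forall>x. x \<notin> A \<longrightarrow> f x = False}"
proof -
  assume A: "finite A"
  have "{f::'a\<Rightarrow>bool. \<forall>x. x \<notin> A \<longrightarrow> f x = False} \<subseteq> (\<lambda>S x. x \<in> S) ` Pow A"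
  proof
    fix f :: "'a \<Rightarrow> bool" assume "f \<in> {f. \<forall>x. x \<notin> A \<longrightarrow> f x = False}"
    hence "f = (\<lambda>x. x \<in> {z\<in>A. f z})" by auto
    thus "f \<in> (\<lambda>S x. x \<in> S) ` Pow A" by blast
  qed
  moreover have "finite ((\<lambda>S x. x \<in> S) ` Pow A)" using A by simp
  ultimately show ?thesis by (rule finite_subset)
qed

lemma finite_set_Pi_bool: "finite A \<Longrightarrow> finite (set_pmf (Pi_pmf A False (q :: 'a \<Rightarrow> bool pmf)))"
  using set_Pi_pmf_subset[of A False q] finite_bool_funs[of A] by (blast intro: finite_subset)

lemma E_bind_finite:
  fixes h :: "'b \<Rightarrow> real"
  assumes "finite (set_pmf p)" "\<And>x. x \<in> set_pmf p \<Longrightarrow> finite (set_pmf (f x))"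
  shows "measure_pmf.expectation (bind_pmf p f) h = measure_pmf.expectation p (\<lambda>x. measure_pmf.expectation (f x) h)"
proof -
  have "measure_pmf.expectation (bind_pmf p f) h = (\<Sum>a\<in>set_pmf p. pmf p a *\<^sub>R measure_pmf.expectation (f a) h)"
    by (rule pmf_expectation_bind) (use assms in auto)
  also have "\<dots> = measure_pmf.expectation p (\<lambda>x. measure_pmf.expectation (f x) h)"
    by (rule integral_measure_pmf[symmetric]) (use assms in auto)
  finally show ?thesis .
qed

lemma E_mono_finite:
  fixes f g :: "'b \<Rightarrow> real"
  assumes "finite (set_pmf p)" "\<And>x. x \<in> set_pmf p \<Longrightarrow> f x \<le> g x"
  shows "measure_pmf.expectation p f \<le> measure_pmf.expectation p g"
  using assms by (intro integral_mono_AE integrable_measure_pmf_finite) (auto simp: AE_measure_pmf_iff)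

lemma E_const_le:
  fixes f :: "'b \<Rightarrow> real"
  assumes "finite (set_pmf p)" "\<And>x. x \<in> set_pmf p \<Longrightarrow> c \<le> f x"
  shows "c \<le> measure_pmf.expectation p f"
proof -
  have "measure_pmf.expectation p (\<lambda>_. c) \<le> measure_pmf.expectation p f"
    by (rule E_mono_finite) (use assms in auto)
  thus ?thesis by simp
qed

lemma E_le_const:
  fixes f :: "'b \<Rightarrow> real"
  assumes "finite (set_pmf p)" "\<And>x. x \<in> set_pmf p \<Longrightarrow> f x \<le> c"
  shows "measure_pmf.expectation p f \<le> c"
proof -
  have "measure_pmf.expectation p f \<le> measure_pmf.expectation p (\<lambda>_. c)"
    by (rule E_mono_finite) (use assms in auto)
  thus ?thesis by simp
qed

lemma E_Pi_insert:
  fixes h :: "('a \<Rightarrow> bool) \<Rightarrow> real"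
  assumes "finite A" "x \<notin> A" "0 \<le> p x" "p x \<le> 1"
  shows "measure_pmf.expectation (Pi_pmf (insert x A) False (\<lambda>z. bernoulli_pmf (p z))) h
       = p x * measure_pmf.expectation (Pi_pmf A False (\<lambda>z. bernoulli_pmf (p z))) (\<lambda>f. h (f(x := True)))
       + (1 - p x) * measure_pmf.expectation (Pi_pmf A False (\<lambda>z. bernoulli_pmf (p z))) (\<lambda>f. h (f(x := False)))"
proof -
  let ?Q = "Pi_pmf A False (\<lambda>z. bernoulli_pmf (p z))"
  have "Pi_pmf (insert x A) False (\<lambda>z. bernoulli_pmf (p z)) = bind_pmf (bernoulli_pmf (p x)) (\<lambda>y. map_pmf (\<lambda>f. f(x := y)) ?Q)"
    using assms by (simp add: Pi_pmf_insert' map_pmf_def)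
  hence "measure_pmf.expectation (Pi_pmf (insert x A) False (\<lambda>z. bernoulli_pmf (p z))) h
       = measure_pmf.expectation (bernoulli_pmf (p x)) (\<lambda>y. measure_pmf.expectation (map_pmf (\<lambda>f. f(x := y)) ?Q) h)"
    by (simp add: E_bind_finite finite_set_Pi_bool assms)
  also have "\<dots> = measure_pmf.expectation (bernoulli_pmf (p x)) (\<lambda>y. measure_pmf.expectation ?Q (\<lambda>f. h (f(x := y))))"
    by simp
  also have "\<dots> = p x * measure_pmf.expectation ?Q (\<lambda>f. h (f(x := True))) + (1 - p x) * measure_pmf.expectation ?Q (\<lambda>f. h (f(x := False)))"
    using assms by (simp add: algebra_simps)
  finally show ?thesis .
qed


lemma combine_ineq:
  fixes l0 L' v0 a' :: real
  assumes "0 \<le> l0" "0 < L'" "v0 \<le> a'"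
  shows "(1 - exp (-l0)) * v0 + exp (-l0) * ((1 - exp (-L')) * a')
         \<le> (1 - exp (-(l0 + L'))) * ((l0 * v0 + L' * a') / (l0 + L'))"
proof -
  define g0 where "g0 = 1 - exp (-l0)"
  define gL where "gL = 1 - exp (-(l0 + L'))"
  define L where "L = l0 + L'"
  have L0: "L > 0" using assms by (simp add: L_def)
  have e: "exp (-l0) * (1 - exp (-L')) = gL - g0"
    by (simp add: gL_def g0_def algebra_simps exp_add[symmetric])
  have conc: "gL * l0 \<le> g0 * L"
    unfolding gL_def g0_def L_def by (rule gconc) (use assms in auto)
  have "gL * ((l0 * v0 + L' * a') / L) - (g0 * v0 + (gL - g0) * a') = (a' - v0) * (g0 - gL * l0 / L)"
    using L0 by (simp add: L_def field_simps)
  moreover have "0 \<le> (a' - v0) * (g0 - gL * l0 / L)"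
  proof -
    have "gL * l0 / L \<le> g0" using conc L0 by (simp add: divide_le_eq)
    thus ?thesis using assms by simp
  qed
  ultimately have I: "g0 * v0 + (gL - g0) * a' \<le> gL * ((l0 * v0 + L' * a') / L)" by linarith
  have "exp (-l0) * ((1 - exp (-L')) * a') = (gL - g0) * a'" using e by (metis mult.assoc)
  hence "(1 - exp (-l0)) * v0 + exp (-l0) * ((1 - exp (-L')) * a') = g0 * v0 + (gL - g0) * a'"
    by (simp add: g0_def)
  moreover have "(1 - exp (-(l0 + L'))) * ((l0 * v0 + L' * a') / (l0 + L')) = gL * ((l0 * v0 + L' * a') / L)"
    by (simp add: gL_def L_def)
  ultimately show ?thesis using I by simp
qed

lemma first_sample:
  fixes A :: "'a set" and v lam p :: "'a \<Rightarrow> real" and M :: real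
  assumes fin: "finite A" and v0: "\<And>x. 0 \<le> v x" and vM: "\<And>x. v x \<le> M" and l0: "\<And>x. 0 \<le> lam x"
    and p1: "\<And>x. 1 - exp (-lam x) \<le> p x" and p2: "\<And>x. p x \<le> 1"
  shows "measure_pmf.expectation (Pi_pmf A False (\<lambda>z. bernoulli_pmf (p z))) (\<lambda>b. Min (insert M (v ` {x\<in>A. b x})))
    \<le> exp (-(\<Sum>x\<in>A. lam x)) * M + (1 - exp (-(\<Sum>x\<in>A. lam x))) * ((\<Sum>x\<in>A. lam x * v x) / (\<Sum>x\<in>A. lam x))"
  using fin
proof (induction A rule: finite_remove_induct)
  case empty
  thus ?case by simp
next
  case (remove A)
  have pp0: "0 \<le> p x" for x
  proof -
    have "exp (-lam x) \<le> 1" using l0[of x] by simp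
    thus ?thesis using p1[of x] by linarith
  qed
  have "v ` A \<noteq> {}" using remove by simp
  hence "Min (v ` A) \<in> v ` A" using remove by (intro Min_in) auto
  then obtain x0 where x0: "x0 \<in> A" "v x0 = Min (v ` A)" by auto
  have x0min: "v x0 \<le> v y" if "y \<in> A" for y
    using x0 that remove by simp
  define A' where "A' = A - {x0}"
  have A': "A = insert x0 A'" "x0 \<notin> A'" "finite A'" using x0 remove by (auto simp: A'_def)
  let ?Q = "Pi_pmf A' False (\<lambda>z. bernoulli_pmf (p z))"
  define h' where "h' b = Min (insert M (v ` {x\<in>A'. b x}))" for b
  define E' where "E' = measure_pmf.expectation ?Q h'"
  have IH: "E' \<le> exp (-(\<Sum>x\<in>A'. lam x)) * M + (1 - exp (-(\<Sum>x\<in>A'. lam x))) * ((\<Sum>x\<in>A'. lam x * v x) / (\<Sum>x\<in>A'. lam x))"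
    unfolding E'_def h'_def A'_def by (rule remove.IH[OF x0(1)])
  have T: "Min (insert M (v ` {x\<in>A. (f(x0 := True)) x})) = v x0" for f
  proof -
    have s: "{x\<in>A. (f(x0 := True)) x} = insert x0 {x\<in>A'. f x}" using A' by auto
    show ?thesis unfolding s
      by (rule Min_eqI) (use A' x0min vM in auto)
  qed
  have F: "Min (insert M (v ` {x\<in>A. (f(x0 := False)) x})) = h' f" for f
  proof -
    have s: "{x\<in>A. (f(x0 := False)) x} = {x\<in>A'. f x}" using A' by auto
    show ?thesis unfolding s h'_def ..
  qed
  have EA: "measure_pmf.expectation (Pi_pmf A False (\<lambda>z. bernoulli_pmf (p z))) (\<lambda>b. Min (insert M (v ` {x\<in>A. b x})))
      = p x0 * v x0 + (1 - p x0) * E'"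
    unfolding A'(1) E'_def
    apply (subst E_Pi_insert)
    using A' pp0 p2 apply auto[4]
    using T F A'(1) by simp
  have E'v: "v x0 \<le> E'"
    unfolding E'_def
  proof (rule E_const_le[OF finite_set_Pi_bool[OF A'(3)]])
    fix f show "v x0 \<le> h' f" unfolding h'_def
      by (rule Min.boundedI) (use A' x0min vM[of x0] in auto)
  qed
  define l where "l = lam x0"
  define L' where "L' = (\<Sum>x\<in>A'. lam x)"
  define S' where "S' = (\<Sum>x\<in>A'. lam x * v x)"
  have sumA: "(\<Sum>x\<in>A. lam x) = l + L'" "(\<Sum>x\<in>A. lam x * v x) = l * v x0 + S'"
    using A' by (simp_all add: l_def L'_def S'_def)
  have L'0: "0 \<le> L'" unfolding L'_def by (intro sum_nonneg l0)
  have step1: "p x0 * v x0 + (1 - p x0) * E' \<le> (1 - exp (-l)) * v x0 + exp (-l) * E'"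
  proof -
    have "(p x0 - (1 - exp (-l))) * (v x0 - E') \<le> 0"
      using p1[of x0] E'v by (intro mult_nonneg_nonpos) (auto simp: l_def)
    thus ?thesis by (simp add: algebra_simps)
  qed
  have step2: "exp (-l) * E' \<le> exp (-l) * (exp (-L') * M + (1 - exp (-L')) * (S' / L'))"
    using IH by (intro mult_left_mono) (auto simp: L'_def S'_def)
  have fin_ineq: "(1 - exp (-l)) * v x0 + exp (-l) * (exp (-L') * M + (1 - exp (-L')) * (S' / L'))
      \<le> exp (-(l + L')) * M + (1 - exp (-(l + L'))) * ((l * v x0 + S') / (l + L'))"
  proof (cases "L' = 0")
    case True
    have "\<forall>x\<in>A'. lam x = 0" using True sum_nonneg_eq_0_iff[OF A'(3), of lam] l0 by (simp add: L'_def)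
    hence S0: "S' = 0" by (simp add: S'_def)
    show ?thesis
    proof (cases "l = 0")
      case True thus ?thesis using S0 \<open>L' = 0\<close> by simp
    next
      case False
      thus ?thesis using S0 \<open>L' = 0\<close> by simp
    qed
  next
    case False
    hence Lp: "L' > 0" using L'0 by simp
    define a' where "a' = S' / L'"
    have Sa: "S' = L' * a'" using Lp by (simp add: a'_def)
    have va: "v x0 \<le> a'"
    proof -
      have "(\<Sum>x\<in>A'. lam x * v x0) \<le> S'" unfolding S'_def
        by (intro sum_mono mult_left_mono) (use A' x0min l0 in auto)
      hence "L' * v x0 \<le> L' * a'" using Sa by (simp add: L'_def sum_distrib_right)
      thus ?thesis using Lp by simp
    qed
    have "(1 - exp (-l)) * v x0 + exp (-l) * ((1 - exp (-L')) * a')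
         \<le> (1 - exp (-(l + L'))) * ((l * v x0 + L' * a') / (l + L'))"
      by (rule combine_ineq) (use Lp va l0 in \<open>auto simp: l_def\<close>)
    moreover have "exp (-l) * (exp (-L') * M + (1 - exp (-L')) * (S' / L')) = exp (-(l + L')) * M + exp (-l) * ((1 - exp (-L')) * a')"
    proof -
      have "exp (-l) * exp (-L') = exp (-(l + L'))" by (simp add: exp_add[symmetric])
      thus ?thesis unfolding a'_def[symmetric] by (simp add: distrib_left mult.assoc[symmetric])
    qed
    moreover have "(1 - exp (-(l + L'))) * ((l * v x0 + S') / (l + L')) = (1 - exp (-(l + L'))) * ((l * v x0 + L' * a') / (l + L'))" using Sa by simp
    ultimately show ?thesis by linarith
  qed
  show ?case unfolding EA sumA using step1 step2 fin_ineq by linarith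
qed


lemma E_Pi_restrict:
  fixes G :: "('a \<Rightarrow> bool) \<Rightarrow> real"
  assumes "finite X" "A \<subseteq> X" "\<And>b. G (\<lambda>x. if x \<in> A then b x else False) = G b"
  shows "measure_pmf.expectation (Pi_pmf X False q) G = measure_pmf.expectation (Pi_pmf A False q) G"
proof -
  have "Pi_pmf A False q = map_pmf (\<lambda>f x. if x \<in> A then f x else False) (Pi_pmf X False q)"
    using assms by (intro Pi_pmf_subset) auto
  hence "measure_pmf.expectation (Pi_pmf A False q) G = measure_pmf.expectation (Pi_pmf X False q) (\<lambda>f. G (\<lambda>x. if x \<in> A then f x else False))"
    by simp
  also have "\<dots> = measure_pmf.expectation (Pi_pmf X False q) G" using assms(3) by simp
  finally show ?thesis by simp
qed

lemma cluster_bound: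
  fixes X A C :: "'a::euclidean_space set" and t :: real
  assumes X: "finite X" "A \<subseteq> X" and C: "finite C" "C \<noteq> {}" and t: "t \<ge> 0"
  shows "measure_pmf.expectation (Pi_pmf X False (\<lambda>x. bernoulli_pmf (min 1 (t * cost x C))))
           (\<lambda>b. cost_set A (C \<union> {x\<in>X. b x}))
         \<le> exp (-(t * cost_set A C)) * cost_set A C + 5 * (\<Sum>y\<in>A. (norm (y - cen A))^2)"
proof (cases "A = {}")
  case True
  thus ?thesis by (simp add: cost_set_def)
next
  case False
  have finA: "finite A" using X finite_subset by blast
  define \<Phi> where "\<Phi> = cost_set A C"
  define R where "R = (\<Sum>y\<in>A. (norm (y - cen A))^2)"
  define f where "f x = (\<Sum>y\<in>A. (norm (y - x))^2)" for x
  define v where "v x = min \<Phi> (f x)" for x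
  define lam where "lam x = t * cost x C" for x
  define p where "p x = min 1 (lam x)" for x
  define G where "G b = Min (insert \<Phi> (v ` {x\<in>A. b x}))" for b
  have c0: "\<And>x. 0 \<le> cost x C" using cost_nonneg[OF C] .
  have Phi0: "0 \<le> \<Phi>" unfolding \<Phi>_def by (rule cost_set_nonneg[OF C])
  have R0: "0 \<le> R" unfolding R_def by (intro sum_nonneg) auto
  let ?P = "Pi_pmf X False (\<lambda>x. bernoulli_pmf (p x))"
  have pw: "cost_set A (C \<union> {x\<in>X. b x}) \<le> G b" for b
  proof -
    let ?D = "C \<union> {x\<in>X. b x}"
    have finD: "finite ?D" using X C by auto
    have a: "cost_set A ?D \<le> \<Phi>" unfolding \<Phi>_def cost_set_def
      by (intro sum_mono cost_mono) (use finD C in auto)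
    have b: "cost_set A ?D \<le> v x" if "x \<in> A" "b x" for x
    proof -
      have "x \<in> ?D" using that X by auto
      hence "cost_set A ?D \<le> f x" unfolding cost_set_def f_def
        by (intro sum_mono cost_le[OF finD])
      thus ?thesis using a by (simp add: v_def)
    qed
    show ?thesis unfolding G_def using a b finA by (subst Min_ge_iff) auto
  qed
  have "measure_pmf.expectation ?P (\<lambda>b. cost_set A (C \<union> {x\<in>X. b x})) \<le> measure_pmf.expectation ?P G"
    by (rule E_mono_finite[OF finite_set_Pi_bool[OF X(1)]]) (rule pw)
  also have "\<dots> = measure_pmf.expectation (Pi_pmf A False (\<lambda>x. bernoulli_pmf (p x))) G"
  proof (rule E_Pi_restrict[OF X])
    fix b :: "'a \<Rightarrow> bool"
    have "{x\<in>A. (if x \<in> A then b x else False)} = {x\<in>A. b x}" by auto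
    thus "G (\<lambda>x. if x \<in> A then b x else False) = G b" unfolding G_def by simp
  qed
  also have "\<dots> \<le> exp (-(\<Sum>x\<in>A. lam x)) * \<Phi> + (1 - exp (-(\<Sum>x\<in>A. lam x))) * ((\<Sum>x\<in>A. lam x * v x) / (\<Sum>x\<in>A. lam x))"
    unfolding G_def
  proof (rule first_sample[OF finA])
    fix x
    show "0 \<le> v x" unfolding v_def f_def using Phi0 by (auto intro: sum_nonneg)
    show "v x \<le> \<Phi>" unfolding v_def by simp
    show "0 \<le> lam x" unfolding lam_def using t c0 by simp
    show "1 - exp (- lam x) \<le> p x"
    proof -
      have "1 - lam x \<le> exp (- lam x)" using exp_ge_add_one_self[of "- lam x"] by simp
      moreover have "0 < exp (- lam x)" by simp
      ultimately show ?thesis unfolding p_def by simp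
    qed
    show "p x \<le> 1" unfolding p_def by simp
  qed
  also have "\<dots> \<le> exp (-(t * \<Phi>)) * \<Phi> + 5 * R"
  proof -
    have L: "(\<Sum>x\<in>A. lam x) = t * \<Phi>" by (simp add: lam_def \<Phi>_def cost_set_def sum_distrib_left)
    have K: "(\<Sum>x\<in>A. lam x * v x) / (t * \<Phi>) \<le> 5 * R"
    proof (cases "t * \<Phi> = 0")
      case True thus ?thesis using R0 by (simp only: True div_by_0)
    next
      case False
      hence tp: "t > 0" "\<Phi> > 0" using t Phi0 by (auto simp: less_le)
      have d2: "(\<Sum>x\<in>A. cost x C * v x) \<le> 5 * \<Phi> * R"
        unfolding v_def f_def \<Phi>_def R_def by (rule d2_lemma[OF finA \<open>A \<noteq> {}\<close> C])
      have "(\<Sum>x\<in>A. lam x * v x) = t * (\<Sum>x\<in>A. cost x C * v x)"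
        by (simp add: lam_def sum_distrib_left mult.assoc)
      hence "(\<Sum>x\<in>A. lam x * v x) / (t * \<Phi>) = (\<Sum>x\<in>A. cost x C * v x) / \<Phi>" using tp by simp
      also have "\<dots> \<le> 5 * R" using d2 tp by (simp add: divide_le_eq mult.commute mult.left_commute)
      finally show ?thesis .
    qed
    have e1: "0 \<le> 1 - exp (-(t * \<Phi>))" using t Phi0 by simp
    have e2: "1 - exp (-(t * \<Phi>)) \<le> 1" by simp
    have "(1 - exp (-(t * \<Phi>))) * ((\<Sum>x\<in>A. lam x * v x) / (t * \<Phi>)) \<le> (1 - exp (-(t * \<Phi>))) * (5 * R)"
      using K e1 by (intro mult_left_mono) auto
    also have "\<dots> \<le> 1 * (5 * R)" using e2 R0 by (intro mult_right_mono) auto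
    finally show ?thesis unfolding L by simp
  qed
  finally show ?thesis unfolding \<Phi>_def R_def p_def lam_def .
qed


lemma scalar_big:
  fixes Cs :: "'b set" and \<Phi> :: "'b \<Rightarrow> real" and Z l :: real
  assumes "finite Cs" "\<And>c. c \<in> Cs \<Longrightarrow> 0 \<le> \<Phi> c" "Z > 0" "l > 0"
  shows "(\<Sum>c\<in>Cs. exp (-(l / Z * \<Phi> c)) * \<Phi> c) \<le> real (card Cs) / (exp 1 * l) * Z"
proof -
  have "exp (-(l / Z * \<Phi> c)) * \<Phi> c \<le> Z / (exp 1 * l)" for c
  proof -
    have "(l / Z * \<Phi> c) * exp (-(l / Z * \<Phi> c)) \<le> exp (-1)" by (rule xexp_le)
    hence "Z / l * ((l / Z * \<Phi> c) * exp (-(l / Z * \<Phi> c))) \<le> Z / l * exp (-1)"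
      using assms by (intro mult_left_mono) auto
    moreover have "Z / l * ((l / Z * \<Phi> c) * exp (-(l / Z * \<Phi> c))) = exp (-(l / Z * \<Phi> c)) * \<Phi> c"
      using assms by (simp add: field_simps)
    moreover have "Z / l * exp (-1) = Z / (exp 1 * l)" by (simp add: exp_minus field_simps)
    ultimately show ?thesis by simp
  qed
  hence "(\<Sum>c\<in>Cs. exp (-(l / Z * \<Phi> c)) * \<Phi> c) \<le> (\<Sum>c\<in>Cs. Z / (exp 1 * l))" by (intro sum_mono)
  also have "\<dots> = real (card Cs) / (exp 1 * l) * Z" by simp
  finally show ?thesis .
qed

lemma scalar_small:
  fixes Cs :: "'b set" and \<Phi> :: "'b \<Rightarrow> real" and Z l :: real
  assumes "finite Cs" "card Cs = k" "k \<ge> 1" "\<And>c. c \<in> Cs \<Longrightarrow> 0 \<le> \<Phi> c" "(\<Sum>c\<in>Cs. \<Phi> c) = Z" "Z > 0" "l > 0" "l < k"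
  shows "(\<Sum>c\<in>Cs. exp (-(l / Z * \<Phi> c)) * \<Phi> c) \<le> exp (- l / k) * Z"
proof -
  define a where "a = l / k"
  have a: "0 \<le> a" "a \<le> 1" using assms by (auto simp: a_def)
  define y where "y c = l / Z * \<Phi> c" for c
  have tm: "exp (-(l / Z * \<Phi> c)) * \<Phi> c \<le> Z / l * (exp (-a) * (a + (1 - a) * (y c - a)))" if "c \<in> Cs" for c
  proof -
    have y0: "0 \<le> y c" using assms that by (simp add: y_def)
    have "(a + (y c - a)) * exp (-(y c - a)) \<le> a + (1 - a) * (y c - a)"
      by (rule tangent_ineq) (use a y0 in auto)
    hence "y c * exp (- y c) \<le> exp (-a) * (a + (1 - a) * (y c - a))"
    proof -
      assume h: "(a + (y c - a)) * exp (-(y c - a)) \<le> a + (1 - a) * (y c - a)"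
      have "y c * exp (- y c) = exp (-a) * ((a + (y c - a)) * exp (-(y c - a)))"
        by (simp add: exp_add[symmetric] algebra_simps)
      also have "\<dots> \<le> exp (-a) * (a + (1 - a) * (y c - a))" using h by (intro mult_left_mono) auto
      finally show ?thesis .
    qed
    hence "Z / l * (y c * exp (- y c)) \<le> Z / l * (exp (-a) * (a + (1 - a) * (y c - a)))"
      using assms by (intro mult_left_mono) auto
    moreover have "Z / l * (y c * exp (- y c)) = exp (-(l / Z * \<Phi> c)) * \<Phi> c"
      using assms by (simp add: y_def field_simps)
    ultimately show ?thesis by simp
  qed
  have "(\<Sum>c\<in>Cs. exp (-(l / Z * \<Phi> c)) * \<Phi> c) \<le> (\<Sum>c\<in>Cs. Z / l * (exp (-a) * (a + (1 - a) * (y c - a))))"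
    by (intro sum_mono tm)
  also have "\<dots> = Z / l * exp (-a) * (\<Sum>c\<in>Cs. (a + (1 - a) * (y c - a)))"
    by (simp add: sum_distrib_left mult.assoc)
  also have "(\<Sum>c\<in>Cs. (a + (1 - a) * (y c - a))) = k * a + (1 - a) * ((\<Sum>c\<in>Cs. y c) - k * a)"
    using assms by (simp add: sum.distrib sum_distrib_left[symmetric] sum_subtractf)
  also have "(\<Sum>c\<in>Cs. y c) = l"
  proof -
    have "(\<Sum>c\<in>Cs. y c) = l / Z * (\<Sum>c\<in>Cs. \<Phi> c)" unfolding y_def by (rule sum_distrib_left[symmetric])
    thus ?thesis using assms by simp
  qed
  also have "k * a = l" using assms by (simp add: a_def)
  also have "Z / l * exp (-a) * (l + (1 - a) * (l - l)) = exp (-a) * Z" using assms by simp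
  also have "exp (-a) = exp (- l / k)" by (simp add: a_def)
  finally show ?thesis .
qed


definition rate :: "real \<Rightarrow> nat \<Rightarrow> real" where
  "rate l k = (if l < real k then exp (- l / real k) else real k / (exp 1 * l))"

lemma rate_nonneg: "l > 0 \<Longrightarrow> 0 \<le> rate l k"
  by (simp add: rate_def)

lemma R_le_any:
  fixes A :: "'a::euclidean_space set"
  assumes "finite A"
  shows "(\<Sum>y\<in>A. (norm (y - cen A))^2) \<le> (\<Sum>y\<in>A. (norm (y - z))^2)"
proof (cases "A = {}")
  case True thus ?thesis by simp
next
  case False
  show ?thesis unfolding centroid_identity[OF assms False, of z] by simp
qed

lemma step_bound:
  fixes X C Cs :: "'a::euclidean_space set"
  assumes X: "finite X" and C: "finite C" "C \<noteq> {}" and l: "l > 0"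
    and Cs: "finite Cs" "card Cs = k" "k \<ge> 1"
  shows "measure_pmf.expectation (kmpar_step X l C) (\<lambda>D. cost_set X D)
         \<le> rate l k * cost_set X C + 5 * cost_set X Cs"
proof -
  have Csne: "Cs \<noteq> {}" using Cs by auto
  define Z where "Z = cost_set X C"
  have Z0: "0 \<le> Z" unfolding Z_def by (rule cost_set_nonneg[OF C])
  have Q0: "0 \<le> cost_set X Cs" by (rule cost_set_nonneg[OF Cs(1) Csne])
  have r0: "0 \<le> rate l k" using l by (rule rate_nonneg)
  let ?P = "Pi_pmf X False (\<lambda>x. bernoulli_pmf (min 1 (l * cost x C / cost_set X C)))"
  have E_eq: "measure_pmf.expectation (kmpar_step X l C) (\<lambda>D. cost_set X D)
       = measure_pmf.expectation ?P (\<lambda>b. cost_set X (C \<union> {x\<in>X. b x}))"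
    by (simp add: kmpar_step_def)
  show ?thesis
  proof (cases "Z = 0")
    case True
    have "measure_pmf.expectation ?P (\<lambda>b. cost_set X (C \<union> {x\<in>X. b x})) \<le> 0"
    proof (rule E_le_const[OF finite_set_Pi_bool[OF X]])
      fix b
      have "cost_set X (C \<union> {x\<in>X. b x}) \<le> cost_set X C" unfolding cost_set_def
        by (intro sum_mono cost_mono) (use X C in auto)
      thus "cost_set X (C \<union> {x\<in>X. b x}) \<le> 0" using True by (simp add: Z_def)
    qed
    moreover have "0 \<le> rate l k * cost_set X C + 5 * cost_set X Cs"
      using r0 Q0 Z0 unfolding Z_def by simp
    ultimately show ?thesis using E_eq by linarith
  next
    case False
    hence Zp: "Z > 0" using Z0 by simp
    define t where "t = l / Z"
    have t0: "t \<ge> 0" using l Zp by (simp add: t_def)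
    have Peq: "?P = Pi_pmf X False (\<lambda>x. bernoulli_pmf (min 1 (t * cost x C)))"
      by (simp add: t_def Z_def)
    define \<sigma> where "\<sigma> x = (SOME c. c \<in> Cs \<and> cost x Cs = (norm (x - c))^2)" for x
    have \<sigma>: "\<sigma> x \<in> Cs \<and> cost x Cs = (norm (x - \<sigma> x))^2" for x
      unfolding \<sigma>_def by (rule someI_ex) (use cost_ex[OF Cs(1) Csne, of x] in blast)
    define A where "A c = {x\<in>X. \<sigma> x = c}" for c
    have AX: "A c \<subseteq> X" for c by (auto simp: A_def)
    have dec: "cost_set X D = (\<Sum>c\<in>Cs. cost_set (A c) D)" for D
      unfolding cost_set_def A_def
      by (rule sum.group[symmetric]) (use X Cs \<sigma> in auto)
    define \<Phi> where "\<Phi> c = cost_set (A c) C" for c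
    define R where "R c = (\<Sum>y\<in>A c. (norm (y - cen (A c)))^2)" for c
    have "measure_pmf.expectation ?P (\<lambda>b. cost_set X (C \<union> {x\<in>X. b x}))
        = measure_pmf.expectation ?P (\<lambda>b. \<Sum>c\<in>Cs. cost_set (A c) (C \<union> {x\<in>X. b x}))"
      by (simp add: dec)
    also have "\<dots> = (\<Sum>c\<in>Cs. measure_pmf.expectation ?P (\<lambda>b. cost_set (A c) (C \<union> {x\<in>X. b x})))"
      by (rule Bochner_Integration.integral_sum) (rule integrable_measure_pmf_finite[OF finite_set_Pi_bool[OF X]])
    also have "\<dots> \<le> (\<Sum>c\<in>Cs. exp (-(t * \<Phi> c)) * \<Phi> c + 5 * R c)"
    proof (rule sum_mono)
      fix c assume "c \<in> Cs"
      show "measure_pmf.expectation ?P (\<lambda>b. cost_set (A c) (C \<union> {x\<in>X. b x})) \<le> exp (-(t * \<Phi> c)) * \<Phi> c + 5 * R c"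
        unfolding Peq \<Phi>_def R_def by (rule cluster_bound[OF X AX C t0])
    qed
    also have "\<dots> = (\<Sum>c\<in>Cs. exp (-(l / Z * \<Phi> c)) * \<Phi> c) + 5 * (\<Sum>c\<in>Cs. R c)"
      by (simp add: sum.distrib sum_distrib_left t_def)
    also have "\<dots> \<le> rate l k * Z + 5 * cost_set X Cs"
    proof -
      have Phi0: "\<And>c. c \<in> Cs \<Longrightarrow> 0 \<le> \<Phi> c" unfolding \<Phi>_def by (rule cost_set_nonneg[OF C])
      have sPhi: "(\<Sum>c\<in>Cs. \<Phi> c) = Z" unfolding \<Phi>_def Z_def by (rule dec[symmetric])
      have S1: "(\<Sum>c\<in>Cs. exp (-(l / Z * \<Phi> c)) * \<Phi> c) \<le> rate l k * Z"
      proof (cases "l < real k")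
        case True
        thus ?thesis using scalar_small[OF Cs Phi0 sPhi Zp l True] by (simp add: rate_def)
      next
        case False
        thus ?thesis using scalar_big[OF Cs(1) Phi0 Zp l] Cs(2) by (simp add: rate_def)
      qed
      have S2: "(\<Sum>c\<in>Cs. R c) \<le> cost_set X Cs"
      proof -
        have "(\<Sum>c\<in>Cs. R c) \<le> (\<Sum>c\<in>Cs. \<Sum>y\<in>A c. (norm (y - c))^2)"
          unfolding R_def by (intro sum_mono R_le_any) (use X AX in \<open>auto intro: finite_subset\<close>)
        also have "\<dots> = (\<Sum>c\<in>Cs. \<Sum>y\<in>A c. cost y Cs)"
          by (intro sum.cong refl) (use \<sigma> in \<open>auto simp: A_def\<close>)
        also have "\<dots> = cost_set X Cs" using dec[of Cs] by (simp add: cost_set_def)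
        finally show ?thesis .
      qed
      show ?thesis using S1 S2 by simp
    qed
    finally show ?thesis using E_eq by (simp add: Z_def)
  qed
qed


lemma set_step_sub:
  assumes "finite X" "C \<subseteq> X" "C \<noteq> {}"
  shows "\<forall>D\<in>set_pmf (kmpar_step X l C). D \<subseteq> X \<and> D \<noteq> {}"
  using assms by (auto simp: kmpar_step_def)

lemma finite_set_step:
  assumes "finite X"
  shows "finite (set_pmf (kmpar_step X l C))"
  unfolding kmpar_step_def using finite_set_Pi_bool[OF assms] by simp

lemma seed_inv:
  assumes "finite X" "X \<noteq> {}"
  shows "\<forall>C\<in>set_pmf (kmpar_seed X l t). C \<subseteq> X \<and> C \<noteq> {}"
proof (induction t)
  case 0
  thus ?case using assms by (auto simp: set_pmf_of_set)
next
  case (Suc t)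
  thus ?case using set_step_sub[OF assms(1)] by (auto simp: set_bind_pmf) blast+
qed

lemma finite_set_seed:
  assumes "finite X" "X \<noteq> {}"
  shows "finite (set_pmf (kmpar_seed X l t))"
proof -
  have "set_pmf (kmpar_seed X l t) \<subseteq> Pow X" using seed_inv[OF assms] by auto
  thus ?thesis using assms by (auto intro: finite_subset)
qed

lemma iter_step:
  fixes X Cs :: "'a::euclidean_space set"
  assumes X: "finite X" "X \<noteq> {}" and l: "l > 0" and Cs: "finite Cs" "card Cs = k" "k \<ge> 1"
  shows "expected_cost X l (Suc t) \<le> rate l k * expected_cost X l t + 5 * cost_set X Cs"
proof -
  let ?p = "kmpar_seed X l t"
  have "expected_cost X l (Suc t) = measure_pmf.expectation ?p (\<lambda>C. measure_pmf.expectation (kmpar_step X l C) (\<lambda>D. cost_set X D))"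
    unfolding expected_cost_def by (simp add: E_bind_finite finite_set_seed[OF X] finite_set_step[OF X(1)])
  also have "\<dots> \<le> measure_pmf.expectation ?p (\<lambda>C. rate l k * cost_set X C + 5 * cost_set X Cs)"
  proof (rule E_mono_finite[OF finite_set_seed[OF X]])
    fix C assume "C \<in> set_pmf ?p"
    hence C: "C \<subseteq> X" "C \<noteq> {}" using seed_inv[OF X] by auto
    hence "finite C" using X finite_subset by blast
    thus "measure_pmf.expectation (kmpar_step X l C) (\<lambda>D. cost_set X D) \<le> rate l k * cost_set X C + 5 * cost_set X Cs"
      using step_bound[OF X(1) _ C(2) l Cs] by blast
  qed
  also have "\<dots> = rate l k * expected_cost X l t + 5 * cost_set X Cs"
  proof -
    have int: "integrable (measure_pmf ?p) f" for f :: "'a set \<Rightarrow> real"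
      by (rule integrable_measure_pmf_finite[OF finite_set_seed[OF X]])
    show ?thesis unfolding expected_cost_def
      by (subst Bochner_Integration.integral_add[OF int int]) (simp add: integral_mult_right_zero)
  qed
  finally show ?thesis .
qed

lemma iter_all:
  fixes X Cs :: "'a::euclidean_space set"
  assumes X: "finite X" "X \<noteq> {}" and l: "l > 0" and Cs: "finite Cs" "card Cs = k" "k \<ge> 1"
  shows "expected_cost X l T \<le> rate l k ^ T * expected_cost X l 0 + 5 * cost_set X Cs * (\<Sum>i<T. rate l k ^ i)"
proof (induction T)
  case 0 thus ?case by simp
next
  case (Suc T)
  have r0: "0 \<le> rate l k" using l by (rule rate_nonneg)
  have "expected_cost X l (Suc T) \<le> rate l k * expected_cost X l T + 5 * cost_set X Cs"
    by (rule iter_step[OF X l Cs])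
  also have "\<dots> \<le> rate l k * (rate l k ^ T * expected_cost X l 0 + 5 * cost_set X Cs * (\<Sum>i<T. rate l k ^ i)) + 5 * cost_set X Cs"
    using Suc r0 by (intro add_right_mono mult_left_mono) auto
  also have "\<dots> = rate l k ^ Suc T * expected_cost X l 0 + 5 * cost_set X Cs * (\<Sum>i<Suc T. rate l k ^ i)"
    by (simp add: sum_distrib_left algebra_simps sum.lessThan_Suc_shift del: sum.lessThan_Suc)
  finally show ?case .
qed

lemma rate_lt1: "l > 0 \<Longrightarrow> k \<ge> 1 \<Longrightarrow> rate l k < 1"
proof -
  assume l: "l > 0" and k: "k \<ge> 1"
  show ?thesis
  proof (cases "l < real k")
    case True
    have "- l / real k < 0" using l k by (simp add: divide_neg_pos)
    thus ?thesis using True by (simp add: rate_def)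
  next
    case False
    have "real k / (exp 1 * l) \<le> l / (exp 1 * l)" using False l by (intro divide_right_mono) auto
    also have "\<dots> = 1 / exp 1" using l by simp
    also have "\<dots> < 1" by simp
    finally show ?thesis using False by (simp add: rate_def)
  qed
qed

lemma geom_le:
  fixes r :: real assumes "0 \<le> r" "r < 1"
  shows "(\<Sum>i<T. r ^ i) \<le> 1 / (1 - r)"
proof -
  have "(1 - r) * (\<Sum>i<T. r ^ i) = 1 - r ^ T" by (rule one_diff_power_eq[symmetric])
  also have "\<dots> \<le> 1" using assms by simp
  finally show ?thesis using assms by (simp add: le_divide_eq mult.commute)
qed

lemma infinite_UNIV_eucl: "infinite (UNIV :: 'a::euclidean_space set)"
proof
  assume fin: "finite (UNIV :: 'a set)"
  obtain b :: 'a where b: "b \<in> Basis" using nonempty_Basis by blast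
  have b0: "b \<noteq> 0" using b by auto
  have "inj (\<lambda>r::real. r *\<^sub>R b)" using b0 by (auto simp: inj_def)
  moreover have "finite (range (\<lambda>r::real. r *\<^sub>R b))" using fin by (rule finite_subset[rotated]) simp
  ultimately have "finite (UNIV :: real set)" using finite_imageD by blast
  thus False using infinite_UNIV_char_0 by blast
qed

lemma main_bound:
  fixes X :: "'a::euclidean_space set"
  assumes X: "finite X" "X \<noteq> {}" and l: "l > 0" and k: "k \<ge> 1"
  shows "expected_cost X l T \<le> rate l k ^ T * expected_cost X l 0 + 5 * OPT k X / (1 - rate l k)"
proof -
  define r where "r = rate l k"
  have r: "0 \<le> r" "r < 1" using rate_nonneg[OF l] rate_lt1[OF l k] by (auto simp: r_def)
  define S where "S = {cost_set X C | C :: 'a set. finite C \<and> card C = k}"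
  have bound: "(expected_cost X l T - r ^ T * expected_cost X l 0) * (1 - r) / 5 \<le> s" if "s \<in> S" for s
  proof -
    have "\<exists>C. s = cost_set X C \<and> finite C \<and> card C = k" using that by (simp add: S_def)
    then obtain Cs where Cs: "finite Cs" "card Cs = k" "s = cost_set X Cs" by blast
    have Q0: "0 \<le> cost_set X Cs" using Cs k by (intro cost_set_nonneg) auto
    have "expected_cost X l T \<le> r ^ T * expected_cost X l 0 + 5 * cost_set X Cs * (\<Sum>i<T. r ^ i)"
      unfolding r_def by (rule iter_all[OF X l Cs(1,2) k])
    also have "5 * cost_set X Cs * (\<Sum>i<T. r ^ i) \<le> 5 * cost_set X Cs * (1 / (1 - r))"
      using geom_le[OF r] Q0 by (intro mult_left_mono) auto
    finally have "(expected_cost X l T - r ^ T * expected_cost X l 0) \<le> 5 * s / (1 - r)" using Cs by simp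
    thus ?thesis using r by (simp add: field_simps)
  qed
  have Sne: "S \<noteq> {}"
  proof -
    obtain B :: "'a set" where "finite B" "card B = k"
      using infinite_arbitrarily_large[OF infinite_UNIV_eucl] by blast
    thus ?thesis by (auto simp: S_def)
  qed
  have "(expected_cost X l T - r ^ T * expected_cost X l 0) * (1 - r) / 5 \<le> Inf S"
    by (rule cInf_greatest[OF Sne bound])
  hence "(expected_cost X l T - r ^ T * expected_cost X l 0) * (1 - r) / 5 \<le> OPT k X"
    by (simp add: OPT_def S_def)
  hence "expected_cost X l T - r ^ T * expected_cost X l 0 \<le> 5 * OPT k X / (1 - r)"
    using r by (simp add: field_simps)
  thus ?thesis by (simp add: r_def)
qed

theorem mainTheorem10:
  fixes X :: "'a::euclidean_space set" and k T :: nat and l :: real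
  assumes "finite X" and "X \<noteq> {}" and "k \<ge> 1" and "l > 0" and "T \<ge> 1"
  shows "(l < k \<longrightarrow>
            expected_cost X l T \<le> (exp (- l / k)) ^ T * expected_cost X l 0
              + 5 * OPT k X / (1 - exp (- l / k)))
       \<and> (l \<ge> k \<longrightarrow>
            expected_cost X l T \<le> (k / (exp 1 * l)) ^ T * expected_cost X l 0
              + 5 * OPT k X / (1 - k / (exp 1 * l)))"
  using main_bound[OF assms(1,2,4,3), of T] by (auto simp: rate_def)


end
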